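(* Let $G=\mathbb{Z}\oplus\mathbb{Z}$, written as integer column vectors, and for $(i,j)\neq(0,0)$ let $[i/j]$ denote the unique maximal cyclic subgroup of $G$ containing $\binom{i}{j}$. Let $\nu,\mu$ be integers with $\gcd(\nu,\mu)=1$, $\mu>0$ and $0\le\nu<\mu$. Then the only automorphisms of $G$ that preserve each of $[\nu/\mu]$ and $[1/0]$ are among $$\phi_1=\pm\begin{pmatrix}1&0\\0&1\end{pmatrix},\quad \phi_2=\pm\begin{pmatrix}-1&1\\0&1\end{pmatrix},\quad \phi_3=\pm\begin{pmatrix}-1&0\\0&1\end{pmatrix}.$$ Only $\phi_1$ works for all $[\nu/\mu]$, $\phi_2$ works only for $[1/2]$, and $\phi_3$ works only for $[0/1]$.
   Context: Automorphisms of $\mathbb{Z}\oplus\mathbb{Z}$ are identified with $2\times 2$ integer matrices of determinant $\pm1$ acting on column vectors on the left. An automorphism preserves a subgroup if it maps it onto itself. *)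

theory Defs
  imports "HOL-Analysis.Analysis"
begin

text \<open>Elements of G = Z + Z are integer column vectors of type int^2; automorphisms
are 2x2 integer matrices (type int^2^2) of determinant 1 or -1, acting by A *v x.\<close>

definition col :: "int \<Rightarrow> int \<Rightarrow> int ^ 2" where
  "col i j = vector [i, j]"

definition mat2 :: "int \<Rightarrow> int \<Rightarrow> int \<Rightarrow> int \<Rightarrow> int ^ 2 ^ 2" where
  "mat2 a b c d = vector [vector [a, b], vector [c, d]]"

definition is_automorphism :: "int ^ 2 ^ 2 \<Rightarrow> bool" where
  "is_automorphism A \<longleftrightarrow> det A = 1 \<or> det A = -1"

definition cyclic_gen :: "int ^ 2 \<Rightarrow> (int ^ 2) set" where
  "cyclic_gen w = range (\<lambda>k::int. k *s w)"

definition is_cyclic_subgroup :: "(int ^ 2) set \<Rightarrow> bool" where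
  "is_cyclic_subgroup H \<longleftrightarrow> (\<exists>w. H = cyclic_gen w)"

definition max_cyclic :: "int \<Rightarrow> int \<Rightarrow> (int ^ 2) set" where
  "max_cyclic i j = (THE H. is_cyclic_subgroup H \<and> col i j \<in> H \<and>
      (\<forall>K. is_cyclic_subgroup K \<and> H \<subseteq> K \<longrightarrow> K = H))"

definition preserves :: "int ^ 2 ^ 2 \<Rightarrow> (int ^ 2) set \<Rightarrow> bool" where
  "preserves A H \<longleftrightarrow> (\<lambda>x. A *v x) ` H = H"

end

theory Submission
  imports Defs
begin


lemma vec2_eq: "(x::'a^2) = y \<longleftrightarrow> x$1 = y$1 \<and> x$2 = y$2"
  by (simp add: vec_eq_iff forall_2)

lemma col_nth[simp]: "col i j $ 1 = i" "col i j $ 2 = j"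
  by (simp_all add: col_def)

lemma mat2_nth[simp]: "mat2 a b c d $ 1 $ 1 = a" "mat2 a b c d $ 1 $ 2 = b"
   "mat2 a b c d $ 2 $ 1 = c" "mat2 a b c d $ 2 $ 2 = d"
  by (simp_all add: mat2_def)

lemma mv2: "((A::int^2^2) *v x) $ 1 = A$1$1 * x$1 + A$1$2 * x$2" "(A *v x) $ 2 = A$2$1 * x$1 + A$2$2 * x$2"
  by (simp_all add: matrix_vector_mult_def sum_2)

lemma prim:
  fixes v w :: "int^2"
  assumes "coprime (v$1) (v$2)" "v = k *s w"
  shows "w = v \<or> w = -v"
proof -
  have "k dvd v$1" "k dvd v$2" using assms(2) by simp_all
  hence "is_unit k" using assms(1) coprime_common_divisor by blast
  hence "k = 1 \<or> k = -1" by auto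
  thus ?thesis using assms(2) by (auto simp: vec2_eq)
qed

lemma in_cg: "v \<in> cyclic_gen v" unfolding cyclic_gen_def
  by (rule range_eqI[of _ _ 1]) (simp add: vec2_eq)

lemma cg_neg: "cyclic_gen (-v) = cyclic_gen v"
  unfolding cyclic_gen_def
proof (intro set_eqI iffI)
  fix x assume "x \<in> range (\<lambda>k::int. k *s (-v))"
  then obtain k where "x = k *s (-v)" by auto
  thus "x \<in> range (\<lambda>k::int. k *s v)" by (intro range_eqI[of _ _ "-k"]) (simp add: vec2_eq)
next
  fix x assume "x \<in> range (\<lambda>k::int. k *s v)"
  then obtain k where "x = k *s v" by auto
  thus "x \<in> range (\<lambda>k::int. k *s (-v))" by (intro range_eqI[of _ _ "-k"]) (simp add: vec2_eq)
qed

lemma cg_eq: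
  fixes v u :: "int^2"
  assumes "coprime (v$1) (v$2)"
  shows "cyclic_gen u = cyclic_gen v \<longleftrightarrow> (u = v \<or> u = -v)"
proof
  assume "cyclic_gen u = cyclic_gen v"
  hence "v \<in> cyclic_gen u" using in_cg by auto
  then obtain k where "v = k *s u" unfolding cyclic_gen_def by auto
  thus "u = v \<or> u = -v" using prim assms by blast
next
  assume "u = v \<or> u = -v" thus "cyclic_gen u = cyclic_gen v" using cg_neg by auto
qed

lemma max_cyc:
  assumes "coprime i j"
  shows "max_cyclic i j = cyclic_gen (col i j)"
proof -
  have cp: "coprime (col i j $ 1) (col i j $ 2)" using assms by simp
  have key: "H = cyclic_gen (col i j)" if h1: "is_cyclic_subgroup H" and h2: "col i j \<in> H" for H
  proof -
    obtain w where w: "H = cyclic_gen w" using h1 unfolding is_cyclic_subgroup_def by blast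
    then obtain k where "col i j = k *s w" using h2 unfolding cyclic_gen_def by auto
    hence "w = col i j \<or> w = - col i j" using prim cp by blast
    thus ?thesis using w cg_neg by auto
  qed
  show ?thesis unfolding max_cyclic_def
  proof (rule the_equality)
    show "is_cyclic_subgroup (cyclic_gen (col i j)) \<and> col i j \<in> cyclic_gen (col i j) \<and>
      (\<forall>K. is_cyclic_subgroup K \<and> cyclic_gen (col i j) \<subseteq> K \<longrightarrow> K = cyclic_gen (col i j))"
      using key in_cg unfolding is_cyclic_subgroup_def by blast
  next
    fix H assume "is_cyclic_subgroup H \<and> col i j \<in> H \<and>
      (\<forall>K. is_cyclic_subgroup K \<and> H \<subseteq> K \<longrightarrow> K = H)"
    thus "H = cyclic_gen (col i j)" using key by blast
  qed
qed

lemma img_cg: "(\<lambda>x. A *v x) ` cyclic_gen v = cyclic_gen (A *v (v::int^2))"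
  unfolding cyclic_gen_def image_image
  by (rule arg_cong[where f="\<lambda>f. range f"]) (auto simp: vec2_eq mv2 algebra_simps)

lemma pres:
  assumes "coprime (v$1) (v$2)"
  shows "preserves A (cyclic_gen v) \<longleftrightarrow> (A *v v = v \<or> A *v v = - v)"
  unfolding preserves_def img_cg using cg_eq[OF assms] by simp


lemma bsolve:
  fixes \<nu> \<mu> b :: int
  assumes "gcd \<nu> \<mu> = 1" "\<mu> > 0" "0 \<le> \<nu>" "\<nu> < \<mu>" "b * \<mu> = 2 * \<nu>"
  shows "(b = 0 \<and> \<nu> = 0 \<and> \<mu> = 1) \<or> (b = 1 \<and> \<nu> = 1 \<and> \<mu> = 2)"
proof -
  have "b \<ge> 0" using assms by (smt (verit) mult_neg_pos)
  moreover have "b < 2" proof (rule ccontr)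
    assume "\<not> b < 2" hence "b * \<mu> \<ge> 2 * \<mu>" using assms(2) by (simp add: mult_right_mono)
    thus False using assms by linarith
  qed
  ultimately have "b = 0 \<or> b = 1" by auto
  thus ?thesis
  proof
    assume "b = 0" hence "\<nu> = 0" using assms by simp
    thus ?thesis using assms \<open>b=0\<close> by simp
  next
    assume "b = 1" hence "\<mu> = 2 * \<nu>" using assms by simp
    hence "gcd \<nu> \<mu> = \<nu>" using assms(3) by simp
    thus ?thesis using assms \<open>b=1\<close> \<open>\<mu> = 2*\<nu>\<close> by simp
  qed
qed

lemma ar:
  fixes \<nu> \<mu> a b c d :: int
  assumes "gcd \<nu> \<mu> = 1" "\<mu> > 0" "0 \<le> \<nu>" "\<nu> < \<mu>"
  shows "((a = 1 \<and> c = 0 \<or> a = -1 \<and> c = 0) \<and>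
     ((a*\<nu>+b*\<mu> = \<nu> \<and> c*\<nu>+d*\<mu> = \<mu>) \<or> (a*\<nu>+b*\<mu> = -\<nu> \<and> c*\<nu>+d*\<mu> = -\<mu>)))
   \<longleftrightarrow> ((a=1\<and>b=0\<and>c=0\<and>d=1) \<or> (a=-1\<and>b=0\<and>c=0\<and>d=-1) \<or>
      (((a=-1\<and>b=1\<and>c=0\<and>d=1) \<or> (a=1\<and>b=-1\<and>c=0\<and>d=-1)) \<and> \<nu> = 1 \<and> \<mu> = 2) \<or>
      (((a=-1\<and>b=0\<and>c=0\<and>d=1) \<or> (a=1\<and>b=0\<and>c=0\<and>d=-1)) \<and> \<nu> = 0 \<and> \<mu> = 1))" (is "?lhs \<longleftrightarrow> ?rhs")
proof
  assume L: ?lhs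
  hence c0: "c = 0" by auto
  have d1: "d * \<mu> = \<mu> \<Longrightarrow> d = 1" using assms(2) by (metis mult_cancel_right2 less_irrefl)
  have d2: "d * \<mu> = -\<mu> \<Longrightarrow> d = -1" using assms(2)
    by (metis mult_minus_left mult_cancel_right mult_1 less_irrefl)
  have b0: "b * \<mu> = 0 \<Longrightarrow> b = 0" using assms(2) by simp
  have bs: "b * \<mu> = 2 * \<nu> \<Longrightarrow> (b = 0 \<and> \<nu> = 0 \<and> \<mu> = 1) \<or> (b = 1 \<and> \<nu> = 1 \<and> \<mu> = 2)"
    using bsolve[OF assms, of b] by blast
  have bs': "(-b) * \<mu> = 2 * \<nu> \<Longrightarrow> (-b = 0 \<and> \<nu> = 0 \<and> \<mu> = 1) \<or> (-b = 1 \<and> \<nu> = 1 \<and> \<mu> = 2)"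
    using bsolve[OF assms, of "-b"] by blast
  show ?rhs
  proof (cases "a = 1")
    case True
    then show ?thesis using L c0 d1 d2 b0 bs bs' by (auto simp: algebra_simps)
  next
    case False
    then show ?thesis using L c0 d1 d2 b0 bs bs' by (auto simp: algebra_simps)
  qed
next
  assume ?rhs thus ?lhs by auto
qed

theorem mainTheorem3:
  fixes \<nu> \<mu> :: int and A :: "int ^ 2 ^ 2"
  assumes "gcd \<nu> \<mu> = 1" and "\<mu> > 0" and "0 \<le> \<nu>" and "\<nu> < \<mu>"
    and "is_automorphism A"
  shows "(preserves A (max_cyclic \<nu> \<mu>) \<and> preserves A (max_cyclic 1 0)) \<longleftrightarrow>
     (A = mat2 1 0 0 1 \<or> A = - mat2 1 0 0 1 \<or>
      ((A = mat2 (-1) 1 0 1 \<or> A = - mat2 (-1) 1 0 1) \<and> \<nu> = 1 \<and> \<mu> = 2) \<or>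
      ((A = mat2 (-1) 0 0 1 \<or> A = - mat2 (-1) 0 0 1) \<and> \<nu> = 0 \<and> \<mu> = 1))"
proof -
  have cp: "coprime \<nu> \<mu>" using assms(1) by (simp add: coprime_iff_gcd_eq_1)
  have m1: "max_cyclic \<nu> \<mu> = cyclic_gen (col \<nu> \<mu>)" using max_cyc[OF cp] .
  have m2: "max_cyclic 1 0 = cyclic_gen (col 1 0)" by (rule max_cyc) simp
  have p1: "preserves A (cyclic_gen (col \<nu> \<mu>)) \<longleftrightarrow>
     ((A$1$1*\<nu>+A$1$2*\<mu> = \<nu> \<and> A$2$1*\<nu>+A$2$2*\<mu> = \<mu>) \<or> (A$1$1*\<nu>+A$1$2*\<mu> = -\<nu> \<and> A$2$1*\<nu>+A$2$2*\<mu> = -\<mu>))"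
    by (subst pres) (simp_all add: cp vec2_eq mv2)
  have p2: "preserves A (cyclic_gen (col 1 0)) \<longleftrightarrow> (A$1$1 = 1 \<and> A$2$1 = 0 \<or> A$1$1 = -1 \<and> A$2$1 = 0)"
    by (subst pres) (auto simp: vec2_eq mv2)
  have meq: "\<And>x y z w. A = mat2 x y z w \<longleftrightarrow> A$1$1 = x \<and> A$1$2 = y \<and> A$2$1 = z \<and> A$2$2 = w"
    by (auto simp: vec2_eq)
  have meq': "\<And>x y z w. A = - mat2 x y z w \<longleftrightarrow> A$1$1 = -x \<and> A$1$2 = -y \<and> A$2$1 = -z \<and> A$2$2 = -w"
    by (auto simp: vec2_eq)
  have e: "- (- (1::int)) = 1" by simp
  show ?thesis unfolding m1 m2 p1 p2 meq meq' e
    using ar[OF assms(1-4), of "A$1$1" "A$2$1" "A$1$2" "A$2$2"] by (simp only: conj_commute conj_left_commute minus_zero)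
qed

end
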